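(* Let $f:\mathbb{R}^n\to\mathbb{R}$ be continuously differentiable and bounded below with $\nabla f$ Lipschitz continuous with constant $L(f)$, let $s$ be an integer with $0<s<n$, and let $\{\mathbf{x}^k\}_{k\ge0}$ be a sequence generated by the IHT method with constant $L>L(f)$. Then any accumulation point of $\{\mathbf{x}^k\}_{k\ge0}$ is an $L$-stationary point of the problem (P): minimize $f(\mathbf{x})$ subject to $\|\mathbf{x}\|_0\le s$.
   Context: $C_s=\{\mathbf{x}\in\mathbb{R}^n:\|\mathbf{x}\|_0\le s\}$ where $\|\mathbf{x}\|_0$ is the number of nonzero components. $P_{C_s}(\mathbf{y})=\operatorname{argmin}_{\mathbf{x}\in C_s}\|\mathbf{x}-\mathbf{y}\|^2$ (possibly multi-valued). The IHT method with constant $L$: choose $\mathbf{x}^0\in C_s$ and for $k=0,1,2,\dots$ pick any $\mathbf{x}^{k+1}\in P_{C_s}\!\left(\mathbf{x}^k-\frac1L\nabla f(\mathbf{x}^k)\right)$. A point $\mathbf{x}^*\in C_s$ is $L$-stationary for (P) if $\mathbf{x}^*\in P_{C_s}\!\left(\mathbf{x}^*-\frac1L\nabla f(\mathbf{x}^* )\right)$. "$\nabla f$ Lipschitz with constant $L(f)$" means $\|\nabla f(\mathbf{x})-\nabla f(\mathbf{y})\|\le L(f)\|\mathbf{x}-\mathbf{y}\|$ for all $\mathbf{x},\mathbf{y}$. *)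

theory Defs
  imports "HOL-Analysis.Analysis"
begin

definition l0 :: "real^'n \<Rightarrow> nat" where
  "l0 x = card {i. x $ i \<noteq> 0}"

definition sparse_set :: "nat \<Rightarrow> (real^'n) set" where
  "sparse_set s = {x. l0 x \<le> s}"

definition proj_set :: "(real^'n) set \<Rightarrow> real^'n \<Rightarrow> (real^'n) set" where
  "proj_set C y = {x \<in> C. \<forall>z\<in>C. (norm (x - y))\<^sup>2 \<le> (norm (z - y))\<^sup>2}"

definition IHT_seq :: "nat \<Rightarrow> real \<Rightarrow> (real^'n \<Rightarrow> real^'n) \<Rightarrow> (nat \<Rightarrow> real^'n) \<Rightarrow> bool" where
  "IHT_seq s L g x \<longleftrightarrow> x 0 \<in> sparse_set s \<and>
     (\<forall>k. x (Suc k) \<in> proj_set (sparse_set s) (x k - (1 / L) *\<^sub>R g (x k)))"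

definition L_stationary :: "nat \<Rightarrow> real \<Rightarrow> (real^'n \<Rightarrow> real^'n) \<Rightarrow> real^'n \<Rightarrow> bool" where
  "L_stationary s L g xs \<longleftrightarrow> xs \<in> sparse_set s \<and>
     xs \<in> proj_set (sparse_set s) (xs - (1 / L) *\<^sub>R g xs)"

end

theory Submission
  imports Defs
begin

lemma descent:
  fixes f :: "real^'n \<Rightarrow> real" and g :: "real^'n \<Rightarrow> real^'n"
  assumes grad: "\<And>y. (f has_derivative (\<lambda>h. g y \<bullet> h)) (at y)"
    and lip: "\<And>y z. norm (g y - g z) \<le> Lf * norm (y - z)"
  shows "f y \<le> f x + g x \<bullet> (y - x) + Lf/2 * (norm (y - x))\<^sup>2"
proof -
  define d where "d = y - x"
  define psi where "psi t = f (x + t *\<^sub>R d) - t * (g x \<bullet> d) - Lf/2 * t\<^sup>2 * (norm d)\<^sup>2" for t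
  have der: "(psi has_real_derivative (g (x + t *\<^sub>R d) \<bullet> d - g x \<bullet> d - Lf * t * (norm d)\<^sup>2)) (at t)" for t
  proof -
    have l: "((\<lambda>t. x + t *\<^sub>R d) has_derivative (\<lambda>h. h *\<^sub>R d)) (at t)"
      by (auto intro!: derivative_eq_intros)
    have "((\<lambda>t. f (x + t *\<^sub>R d)) has_derivative (\<lambda>h. g (x + t *\<^sub>R d) \<bullet> (h *\<^sub>R d))) (at t)"
      using has_derivative_compose[OF l grad] .
    then have a: "((\<lambda>t. f (x + t *\<^sub>R d)) has_real_derivative (g (x + t *\<^sub>R d) \<bullet> d)) (at t)"
    proof -
      have "(\<lambda>h. g (x + t *\<^sub>R d) \<bullet> (h *\<^sub>R d)) = (*) (g (x + t *\<^sub>R d) \<bullet> d)"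
        by (auto simp: fun_eq_iff)
      then show ?thesis using \<open>((\<lambda>t. f (x + t *\<^sub>R d)) has_derivative _) (at t)\<close>
        by (simp add: has_field_derivative_def)
    qed
    have b: "((\<lambda>t. t * (g x \<bullet> d)) has_real_derivative (g x \<bullet> d)) (at t)"
      by (auto intro!: derivative_eq_intros)
    have c: "((\<lambda>t. Lf/2 * t\<^sup>2 * (norm d)\<^sup>2) has_real_derivative (Lf * t * (norm d)\<^sup>2)) (at t)"
      by (auto intro!: derivative_eq_intros)
    show ?thesis unfolding psi_def
      using DERIV_diff[OF DERIV_diff[OF a b] c] by simp
  qed
  have nonpos: "g (x + t *\<^sub>R d) \<bullet> d - g x \<bullet> d - Lf * t * (norm d)\<^sup>2 \<le> 0" if "0 \<le> t" for t
  proof -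
    have "g (x + t *\<^sub>R d) \<bullet> d - g x \<bullet> d = (g (x + t *\<^sub>R d) - g x) \<bullet> d" by (simp add: inner_diff_left)
    also have "\<dots> \<le> norm (g (x + t *\<^sub>R d) - g x) * norm d" by (rule norm_cauchy_schwarz)
    also have "\<dots> \<le> (Lf * norm (t *\<^sub>R d)) * norm d"
      using lip[of "x + t *\<^sub>R d" x] by (simp add: mult_right_mono)
    also have "\<dots> = Lf * t * (norm d)\<^sup>2" using that by (simp add: power2_eq_square)
    finally show ?thesis by simp
  qed
  have "psi 1 \<le> psi 0"
  proof (rule DERIV_nonpos_imp_nonincreasing[of 0 1])
    fix t :: real assume "0 \<le> t" "t \<le> 1"
    then show "\<exists>y. (psi has_real_derivative y) (at t) \<and> y \<le> 0"
      using der[of t] nonpos[of t] by blast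
  qed simp
  then show ?thesis by (simp add: psi_def d_def)
qed

theorem theorem3p1:
  fixes f :: "real^'n \<Rightarrow> real" and g :: "real^'n \<Rightarrow> real^'n"
    and s :: nat and Lf L :: real and x :: "nat \<Rightarrow> real^'n" and xstar :: "real^'n"
  assumes grad: "\<And>y. (f has_derivative (\<lambda>h. g y \<bullet> h)) (at y)"
    and grad_cont: "continuous_on UNIV g"
    and bdd_below: "\<exists>c. \<forall>y. c \<le> f y"
    and lipschitz: "\<And>y z. norm (g y - g z) \<le> Lf * norm (y - z)"
    and s_pos: "0 < s" and s_lt: "s < CARD('n)"
    and L_gt: "L > Lf"
    and iht: "IHT_seq s L g x"
    and accum: "\<exists>r. strict_mono r \<and> (x \<circ> r) \<longlonglongrightarrow> xstar"
  shows "L_stationary s L g xstar"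
  proof -
  have Lf0: "0 \<le> Lf"
  proof -
    obtain i :: 'n where True by auto
    have "0 \<le> norm (g 0 - g (axis i 1))" by simp
    also have "\<dots> \<le> Lf * norm (0 - axis i (1::real))" by (rule lipschitz)
    finally show ?thesis by (simp add: norm_minus_commute)
  qed
  have Lpos: "0 < L" using Lf0 L_gt by simp
  define C where "C = (sparse_set s :: (real^'n) set)"
  define v where "v k = x k - (1 / L) *\<^sub>R g (x k)" for k
  define d where "d k = x (Suc k) - x k" for k
  have x0: "x 0 \<in> C" and step: "\<And>k. x (Suc k) \<in> proj_set C (v k)"
    using iht unfolding IHT_seq_def C_def v_def by auto
  have xC: "x k \<in> C" for k
    using x0 step[of "k - 1"] by (cases k) (auto simp: proj_set_def)
  have projle: "\<And>z. z \<in> C \<Longrightarrow> (norm (x (Suc k) - v k))\<^sup>2 \<le> (norm (z - v k))\<^sup>2" for k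
    using step[of k] by (auto simp: proj_set_def)
  have dec: "f (x (Suc k)) \<le> f (x k) - (L - Lf) / 2 * (norm (d k))\<^sup>2" for k
  proof -
    define G where "G = g (x k)"
    have e1: "x (Suc k) - v k = d k + (1/L) *\<^sub>R G" by (simp add: d_def v_def G_def)
    have e2: "x k - v k = (1/L) *\<^sub>R G" by (simp add: v_def G_def)
    define a where "a = (1/L) *\<^sub>R G"
    have "(norm (d k + a))\<^sup>2 \<le> (norm a)\<^sup>2"
      using projle[OF xC, of k k] by (simp add: e1 e2 a_def)
    moreover have "(norm (d k + a))\<^sup>2 = (norm (d k))\<^sup>2 + 2 * (a \<bullet> d k) + (norm a)\<^sup>2"
      by (simp add: power2_norm_eq_inner inner_add_left inner_add_right inner_commute)
    moreover have "a \<bullet> d k = (1/L) * (G \<bullet> d k)" by (simp add: a_def)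
    ultimately have "(norm (d k))\<^sup>2 + 2 * (1/L) * (G \<bullet> d k) \<le> 0" by simp
    then have ip: "G \<bullet> d k \<le> - L / 2 * (norm (d k))\<^sup>2"
      using Lpos by (simp add: field_simps)
    have "f (x (Suc k)) \<le> f (x k) + G \<bullet> d k + Lf/2 * (norm (d k))\<^sup>2"
      using descent[OF grad lipschitz, of "x (Suc k)" "x k"] by (simp add: G_def d_def)
    then show ?thesis using ip by (simp add: field_simps)
  qed
  obtain c where c: "\<And>y. c \<le> f y" using bdd_below by auto
  have tel: "(L - Lf) / 2 * (\<Sum>k<N. (norm (d k))\<^sup>2) \<le> f (x 0) - f (x N)" for N
  proof (induction N)
    case 0 then show ?case by simp
  next
    case (Suc N) then show ?case using dec[of N] by (simp add: algebra_simps)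
  qed
  have bnd: "(\<Sum>k<N. (norm (d k))\<^sup>2) \<le> 2 * (f (x 0) - c) / (L - Lf)" for N
  proof -
    have "(L - Lf) / 2 * (\<Sum>k<N. (norm (d k))\<^sup>2) \<le> f (x 0) - c"
      using tel[of N] c[of "x N"] by simp
    then show ?thesis using L_gt by (simp add: field_simps)
  qed
  have "summable (\<lambda>k. (norm (d k))\<^sup>2)"
    by (rule summableI_nonneg_bounded[OF _ bnd]) simp
  then have "(\<lambda>k. (norm (d k))\<^sup>2) \<longlonglongrightarrow> 0" by (rule summable_LIMSEQ_zero)
  then have "(\<lambda>k. sqrt ((norm (d k))\<^sup>2)) \<longlonglongrightarrow> sqrt 0" by (rule tendsto_real_sqrt)
  then have "(\<lambda>k. norm (d k)) \<longlonglongrightarrow> 0" by simp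
  then have d0: "d \<longlonglongrightarrow> 0" by (simp add: tendsto_norm_zero_iff)
  obtain r where r: "strict_mono r" and xr: "(x \<circ> r) \<longlonglongrightarrow> xstar" using accum by auto
  have dr: "(d \<circ> r) \<longlonglongrightarrow> 0" using LIMSEQ_subseq_LIMSEQ[OF d0 r] .
  have xr': "(\<lambda>k. x (r k)) \<longlonglongrightarrow> xstar" using xr by (simp add: o_def)
  have xr1: "(\<lambda>k. x (Suc (r k))) \<longlonglongrightarrow> xstar"
  proof -
    have "(\<lambda>k. x (r k) + d (r k)) \<longlonglongrightarrow> xstar + 0"
      using tendsto_add[OF xr' dr[unfolded o_def]] .
    then show ?thesis by (simp add: d_def)
  qed
  have gc: "isCont g xstar" using grad_cont by (simp add: continuous_on_eq_continuous_at)
  have vr: "(\<lambda>k. v (r k)) \<longlonglongrightarrow> xstar - (1/L) *\<^sub>R g xstar"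
    unfolding v_def by (intro tendsto_intros xr' isCont_tendsto_compose[OF gc xr'])
  have xsC: "xstar \<in> C"
  proof -
    define S where "S = {i. xstar $ i \<noteq> 0}"
    have "finite S" by simp
    have "\<forall>i\<in>S. eventually (\<lambda>k. x (r k) $ i \<noteq> 0) sequentially"
    proof
      fix i assume "i \<in> S"
      have "(\<lambda>k. x (r k) $ i) \<longlonglongrightarrow> xstar $ i" by (intro tendsto_intros xr')
      then show "eventually (\<lambda>k. x (r k) $ i \<noteq> 0) sequentially"
        using \<open>i \<in> S\<close> tendsto_imp_eventually_ne S_def by auto
    qed
    from eventually_ball_finite[OF \<open>finite S\<close> this]
    obtain k where k: "\<forall>i\<in>S. x (r k) $ i \<noteq> 0"
      by (auto simp: eventually_sequentially)
    have "S \<subseteq> {i. x (r k) $ i \<noteq> 0}" using k by auto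
    then have "card S \<le> card {i. x (r k) $ i \<noteq> 0}" by (intro card_mono) auto
    also have "\<dots> \<le> s" using xC[of "r k"] by (simp add: C_def sparse_set_def l0_def)
    finally show ?thesis by (simp add: C_def sparse_set_def l0_def S_def)
  qed
  have "\<forall>z\<in>C. (norm (xstar - (xstar - (1/L) *\<^sub>R g xstar)))\<^sup>2 \<le> (norm (z - (xstar - (1/L) *\<^sub>R g xstar)))\<^sup>2"
  proof
    fix z assume z: "z \<in> C"
    show "(norm (xstar - (xstar - (1/L) *\<^sub>R g xstar)))\<^sup>2 \<le> (norm (z - (xstar - (1/L) *\<^sub>R g xstar)))\<^sup>2"
    proof (rule LIMSEQ_le)
      show "(\<lambda>k. (norm (x (Suc (r k)) - v (r k)))\<^sup>2) \<longlonglongrightarrow> (norm (xstar - (xstar - (1/L) *\<^sub>R g xstar)))\<^sup>2"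
        by (intro tendsto_intros xr1 vr)
      show "(\<lambda>k. (norm (z - v (r k)))\<^sup>2) \<longlonglongrightarrow> (norm (z - (xstar - (1/L) *\<^sub>R g xstar)))\<^sup>2"
        by (intro tendsto_intros vr)
      show "\<exists>N. \<forall>n\<ge>N. (norm (x (Suc (r n)) - v (r n)))\<^sup>2 \<le> (norm (z - v (r n)))\<^sup>2"
        using projle[OF z] by auto
    qed
  qed
  then show ?thesis using xsC unfolding L_stationary_def proj_set_def C_def by auto
qed

end
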